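(* Let $n=p_1p_2\cdots p_r$, where $r\geq 3$ and $p_1<p_2<\cdots<p_r$ are prime numbers. Then $$\delta(\mathcal{P}(C_n))=\min\{\deg(p_{r-1}p_r),\ \deg(p_r)\}.$$ Further, $\delta(\mathcal{P}(C_n))=\deg(p_r)$ if and only if $$\phi(p_r)\geq\left(\frac{p_1p_2\cdots p_{r-2}}{\phi(p_1p_2\cdots p_{r-2})}-1\right)\phi(p_{r-1}).$$ In particular, if $\phi(p_r)\geq (r-2)\phi(p_{r-1})$, then $\delta(\mathcal{P}(C_n))=\deg(p_r)$.
   Context: For a finite group $G$, the power graph $\mathcal{P}(G)$ is the simple undirected graph with vertex set $G$ in which two distinct vertices are adjacent if one is an integral power of the other. $C_n$ denotes the cyclic group of order $n$, identified with $\mathbb{Z}_n=\{0,1,\ldots,n-1\}$ (addition mod $n$), so a positive divisor $d$ of $n$ with $d<n$ is regarded as the element $d\in\mathbb{Z}_n$. $\deg(a)$ is the degree of the vertex $a$ in $\mathcal{P}(C_n)$, $\delta(\Gamma)$ is the minimum degree of a graph $\Gamma$, and $\phi$ is Euler's totient function. *)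

theory Defs
  imports "HOL-Number_Theory.Number_Theory"
begin

text \<open>The cyclic group C_n is identified with Z_n = {0,...,n-1} under addition mod n.
  In additive notation, b is an integral power of a iff b = k*a mod n for some integer k.\<close>

definition is_power_cyc :: "nat \<Rightarrow> nat \<Rightarrow> nat \<Rightarrow> bool" where
  "is_power_cyc n b a \<longleftrightarrow> (\<exists>k::int. int b = (k * int a) mod int n)"

definition pg_adj :: "nat \<Rightarrow> nat \<Rightarrow> nat \<Rightarrow> bool" where
  "pg_adj n a b \<longleftrightarrow> a \<in> {0..<n} \<and> b \<in> {0..<n} \<and> a \<noteq> b \<and>
     (is_power_cyc n b a \<or> is_power_cyc n a b)"

definition pg_deg :: "nat \<Rightarrow> nat \<Rightarrow> nat" where
  "pg_deg n a = card {b \<in> {0..<n}. pg_adj n a b}"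

definition pg_min_deg :: "nat \<Rightarrow> nat" where
  "pg_min_deg n = Min (pg_deg n ` {0..<n})"

end

theory Submission
  imports Defs "HOL-Number_Theory.Number_Theory"
begin



lemma pow_iff:
  assumes "n > 0" "b < n"
  shows "is_power_cyc n b a \<longleftrightarrow> gcd a n dvd b"
proof
  assume "is_power_cyc n b a"
  then obtain k where k: "int b = (k * int a) mod int n" unfolding is_power_cyc_def by blast
  have "int (gcd a n) dvd k * int a" by simp
  moreover have "int (gcd a n) dvd int n" by simp
  ultimately have "int (gcd a n) dvd (k * int a) mod int n" by (simp add: dvd_mod)
  then have "int (gcd a n) dvd int b" using k by simp
  then show "gcd a n dvd b" by simp
next
  assume "gcd a n dvd b"
  then obtain t where t: "b = gcd a n * t" by blast
  obtain u v where uv: "u * int a + v * int n = gcd (int a) (int n)" using bezout_int by blast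
  have "(int t * u * int a) mod int n = (int t * (u * int a + v * int n)) mod int n"
    by (metis (no_types, opaque_lifting) mod_mult_self1 distrib_left mult.assoc mult.commute)
  also have "\<dots> = int b mod int n" using uv t by (simp add: mult.commute)
  also have "\<dots> = int b" using assms by simp
  finally show "is_power_cyc n b a" unfolding is_power_cyc_def by (metis)
qed




lemma tot_lt: "m > 0 \<Longrightarrow> card {t\<in>{0..<m}. coprime t m} = totient m"
proof (cases "m = 1")
  case True
  then have "{t\<in>{0..<m}. coprime t m} = {0}" by auto
  then show ?thesis using True by simp
next
  case False
  assume "m > 0"
  with False have m1: "m > 1" by simp
  have "{t\<in>{0..<m}. coprime t m} = totatives m"
  proof safe
    fix t assume "t \<in> {0..<m}" "coprime t m"
    moreover have "t \<noteq> 0"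
    proof
      assume "t = 0"
      then have "coprime 0 m" using \<open>coprime t m\<close> by simp
      then have "m = 1" by simp
      then show False using m1 by simp
    qed
    ultimately show "t \<in> totatives m" by (auto simp: totatives_def)
  next
    fix t assume "t \<in> totatives m"
    then show "t \<in> {0..<m}" using totatives_less m1 by auto
  qed (auto simp: totatives_def)
  then show ?thesis by (simp add: totient_def)
qed

lemma cA: "g > 0 \<Longrightarrow> card {b\<in>{0..<m*g}. g dvd b} = m"
proof -
  assume g: "g > 0"
  have "{b\<in>{0..<m*g}. g dvd b} = (\<lambda>t. g*t) ` {0..<m}"
  proof safe
    fix b assume "b \<in> {0..<m*g}" "g dvd b"
    then obtain t where "b = g*t" by blast
    with \<open>b \<in> {0..<m*g}\<close> g have "t < m" by (simp add: mult.commute)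
    then show "b \<in> (\<lambda>t. g*t) ` {0..<m}" using \<open>b = g*t\<close> by auto
  next
    fix t assume "t \<in> {0..<m}"
    then show "g*t \<in> {0..<m*g}" using g by (simp add: mult.commute)
  qed auto
  moreover have "inj_on (\<lambda>t. g*t) {0..<m}" using g by (auto simp: inj_on_def)
  ultimately show ?thesis by (simp add: card_image)
qed

lemma cB: "m > 0 \<Longrightarrow> card {b\<in>{0..<m*g}. coprime b m} = g * totient m"
proof -
  assume m: "m > 0"
  define T where "T = {t\<in>{0..<m}. coprime t m}"
  define f where "f = (\<lambda>(t::nat,u::nat). t + m*u)"
  have "{b\<in>{0..<m*g}. coprime b m} = f ` (T \<times> {0..<g})"
  proof safe
    fix b assume b: "b \<in> {0..<m*g}" "coprime b m"
    have "b = f (b mod m, b div m)" by (simp add: f_def)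
    moreover have "b mod m \<in> T" using b m by (simp add: T_def)
    moreover have "b div m < g" using b m by (simp add: less_mult_imp_div_less mult.commute)
    ultimately show "b \<in> f ` (T \<times> {0..<g})" by force
  next
    fix t u assume "t \<in> T" "u \<in> {0..<g}"
    then have "t < m" "u < g" "coprime t m" by (auto simp: T_def)
    have "t + m*u < m + m*u" using \<open>t<m\<close> by simp
    also have "\<dots> = m * (u+1)" by simp
    also have "\<dots> \<le> m * g" using \<open>u<g\<close> by (intro mult_le_mono2) simp
    finally show "f (t,u) \<in> {0..<m*g}" by (simp add: f_def)
    have "(t + m*u) mod m = t" using \<open>t<m\<close> by simp
    then have "coprime (t + m*u) m" using \<open>coprime t m\<close> m by (metis coprime_mod_left_iff not_gr0)
    then show "coprime (f (t,u)) m" by (simp add: f_def)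
  qed
  moreover have "inj_on f (T \<times> {0..<g})"
  proof (rule inj_onI, clarify)
    fix t u t' u' assume "t \<in> T" "t' \<in> T" "f (t,u) = f (t',u')"
    then have "t < m" "t' < m" "t + m*u = t' + m*u'" by (auto simp: T_def f_def)
    then have "(t + m*u) mod m = (t' + m*u') mod m" "(t + m*u) div m = (t' + m*u') div m" by simp_all
    then show "t = t' \<and> u = u'" using \<open>t<m\<close> \<open>t'<m\<close> m by simp
  qed
  ultimately have "card {b\<in>{0..<m*g}. coprime b m} = card T * g" by (simp add: card_image card_cartesian_product)
  then show ?thesis using tot_lt[OF m] by (simp add: T_def)
qed

lemma cAB: "g > 0 \<Longrightarrow> m > 0 \<Longrightarrow> coprime g m \<Longrightarrow> card {b\<in>{0..<m*g}. g dvd b \<and> coprime b m} = totient m"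
proof -
  assume g: "g > 0" and m: "m > 0" and cop: "coprime g m"
  have "{b\<in>{0..<m*g}. g dvd b \<and> coprime b m} = (\<lambda>t. g*t) ` {t\<in>{0..<m}. coprime t m}"
  proof safe
    fix b assume "b \<in> {0..<m*g}" "g dvd b" "coprime b m"
    then obtain t where "b = g*t" by blast
    with \<open>b \<in> {0..<m*g}\<close> g have "t < m" by (simp add: mult.commute)
    moreover have "coprime t m" using \<open>coprime b m\<close> \<open>b = g*t\<close> by simp
    ultimately show "b \<in> (\<lambda>t. g*t) ` {t\<in>{0..<m}. coprime t m}" using \<open>b = g*t\<close> by auto
  next
    fix t assume "t \<in> {0..<m}" "coprime t m"
    then show "g*t \<in> {0..<m*g}" using g by (simp add: mult.commute)
    show "coprime (g*t) m" using cop \<open>coprime t m\<close> by simp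
  qed auto
  moreover have "inj_on (\<lambda>t. g*t) {t\<in>{0..<m}. coprime t m}" using g by (auto simp: inj_on_def)
  ultimately show ?thesis using tot_lt[OF m] by (simp add: card_image)
qed




lemma deg_formula:
  assumes n: "n > 0" "a < n" and mg: "m * gcd a n = n" and cop: "coprime (gcd a n) m"
  shows "pg_deg n a + 1 = m + gcd a n * totient m - totient m"
proof -
  define g where "g = gcd a n"
  have g0: "g > 0" using n by (simp add: g_def)
  have m0: "m > 0" using mg n by (cases "m = 0") auto
  have mg': "n = m * g" using mg by (simp add: g_def)
  have cop': "coprime g m" using cop by (simp add: g_def)
  have key: "gcd b n dvd a \<longleftrightarrow> coprime b m" for b
  proof
    assume h: "gcd b n dvd a"
    define d where "d = gcd b m"
    have "d dvd n" unfolding d_def mg' by (rule dvd_mult2) (rule gcd_dvd2)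
    have "d dvd gcd b n" using \<open>d dvd n\<close> unfolding d_def by (intro gcd_greatest) auto
    then have "d dvd a" using h by (rule dvd_trans)
    then have "d dvd g" using \<open>d dvd n\<close> unfolding g_def by (rule gcd_greatest)
    moreover have "d dvd m" unfolding d_def by (rule gcd_dvd2)
    ultimately have "d = 1" using cop' coprime_common_divisor_nat[of g m d] by blast
    then have "gcd b m = 1" using d_def by simp
    then show "coprime b m" by (simp only: coprime_iff_gcd_eq_1)
  next
    assume h: "coprime b m"
    define x where "x = gcd b n"
    have "x dvd b" unfolding x_def by (rule gcd_dvd1)
    then obtain k where "b = x * k" by (rule dvdE)
    then have "coprime x m" using h by simp
    moreover have "x dvd g * m" unfolding x_def using mg' by (metis gcd_dvd2 mult.commute)
    ultimately have "x dvd g" using coprime_dvd_mult_left_iff[of x m g] by simp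
    then show "gcd b n dvd a" unfolding x_def g_def using dvd_trans gcd_dvd1 by blast
  qed
  define A where "A = {b\<in>{0..<n}. g dvd b}"
  define B where "B = {b\<in>{0..<n}. coprime b m}"
  have S: "{b \<in> {0..<n}. pg_adj n a b} = (A \<union> B) - {a}"
  proof -
    have "pg_adj n a b \<longleftrightarrow> b \<in> (A \<union> B) - {a}" if "b \<in> {0..<n}" for b
      using that n unfolding pg_adj_def A_def B_def
      apply (simp only: atLeastLessThan_iff mem_Collect_eq Un_iff Diff_iff singleton_iff)
      apply (simp add: pow_iff key g_def)
      by blast
    then show ?thesis by (auto simp: A_def B_def)
  qed
  have aA: "a \<in> A" using n by (simp add: A_def g_def)
  have fin: "finite A" "finite B" by (auto simp: A_def B_def)
  have e1: "card (A \<union> B) + card (A \<inter> B) = card A + card B" using fin by (rule card_Un_Int[symmetric])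
  have e2: "card A = m" unfolding A_def mg' using cA[OF g0] .
  have e3: "card B = g * totient m" unfolding B_def mg' using cB[OF m0] .
  have e4: "A \<inter> B = {b\<in>{0..<m*g}. g dvd b \<and> coprime b m}" by (auto simp: A_def B_def mg')
  have e5: "card (A \<inter> B) = totient m" unfolding e4 using cAB[OF g0 m0 cop'] .
  have e6: "card (A \<union> B) = m + g * totient m - totient m" using e1 e2 e3 e5 by linarith
  have e7: "card ((A \<union> B) - {a}) + 1 = card (A \<union> B)"
  proof -
    have "a \<in> A \<union> B" "finite (A \<union> B)" using aA fin by auto
    then have "card (A \<union> B) > 0" using card_gt_0_iff by blast
    then show ?thesis using card_Diff_singleton[OF \<open>a \<in> A \<union> B\<close>] by linarith
  qed
  have "pg_deg n a = card ((A \<union> B) - {a})" unfolding pg_deg_def S ..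
  then show ?thesis using e6 e7 by (simp add: g_def)
qed




lemma prod_primes_dvd:
  assumes P: "\<forall>i\<in>I. prime (p i)" and inj: "inj_on p I" and fin: "finite J" and JI: "J \<subseteq> I"
    and dv: "\<forall>i\<in>J. p i dvd (a::nat)"
  shows "(\<Prod>i\<in>J. p i) dvd a"
  using fin JI dv
proof (induction J rule: finite_induct)
  case empty
  then show ?case by simp
next
  case (insert k J)
  have "coprime (p k) (\<Prod>i\<in>J. p i)"
  proof (rule prod_coprime_right)
    fix i assume "i \<in> J"
    then have "p i \<noteq> p k" using insert inj by (metis inj_on_def insert_subset subsetD)
    then show "coprime (p k) (p i)" using P insert \<open>i \<in> J\<close> by (intro primes_coprime) auto
  qed
  then show ?case using insert by (simp add: divides_mult)
qed

lemma coprime_prods: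
  assumes P: "\<forall>i\<in>I. prime (p i)" and inj: "inj_on p I" and "J \<subseteq> I" "K \<subseteq> I" "J \<inter> K = {}"
  shows "coprime (\<Prod>i\<in>J. p i :: nat) (\<Prod>i\<in>K. p i)"
proof (rule prod_coprime_left, rule prod_coprime_right)
  fix i j assume "i \<in> J" "j \<in> K"
  then have "i \<noteq> j" "i \<in> I" "j \<in> I" using assms by auto
  then have "p i \<noteq> p j" using inj by (auto simp: inj_on_def)
  then show "coprime (p i) (p j)" using P \<open>i \<in> I\<close> \<open>j \<in> I\<close> by (intro primes_coprime) auto
qed

lemma totient_prod_primes:
  assumes P: "\<forall>i\<in>I. prime (p i)" and inj: "inj_on p I" and XI: "X \<subseteq> I"
  shows "totient (\<Prod>i\<in>X. p i) = (\<Prod>i\<in>X. p i - 1)"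
proof -
  have inj': "inj_on p X" using inj XI inj_on_subset by blast
  have "pairwise coprime (p ` X)"
    unfolding pairwise_def using P XI by (auto intro!: primes_coprime)
  then have "totient (\<Prod>i\<in>X. p i) = (\<Prod>i\<in>X. totient (p i))"
    using totient_prod_coprime[of p X] inj' by simp
  also have "\<dots> = (\<Prod>i\<in>X. p i - 1)" using P XI by (intro prod.cong refl) (auto simp: totient_prime)
  finally show ?thesis .
qed

lemma deg_struct:
  fixes p :: "nat \<Rightarrow> nat" and r :: nat
  assumes P: "\<forall>i\<in>{1..r}. prime (p i)" and inj: "inj_on p {1..r}"
    and n: "n = (\<Prod>i=1..r. p i)" and a: "a < n"
  shows "pg_deg n a + 1 = (\<Prod>i\<in>{i\<in>{1..r}. \<not> p i dvd a}. p i)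
          + (\<Prod>i\<in>{i\<in>{1..r}. p i dvd a}. p i) * (\<Prod>i\<in>{i\<in>{1..r}. \<not> p i dvd a}. p i - 1)
          - (\<Prod>i\<in>{i\<in>{1..r}. \<not> p i dvd a}. p i - 1)"
proof -
  define X where "X = {i\<in>{1..r}. \<not> p i dvd a}"
  define J where "J = {i\<in>{1..r}. p i dvd a}"
  define G where "G = (\<Prod>i\<in>J. p i)"
  define M where "M = (\<Prod>i\<in>X. p i)"
  have un: "{1..r} = J \<union> X" "J \<inter> X = {}" by (auto simp: J_def X_def)
  have fJ: "finite J" "finite X" unfolding J_def X_def
    by simp_all
  have nGM: "n = G * M" unfolding n G_def M_def un(1)
    by (rule prod.union_disjoint) (use fJ un in auto)
  have n0: "n > 0" using a by simp
  have Gd: "G dvd a" unfolding G_def using P inj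
    by (intro prod_primes_dvd[of "{1..r}"]) (auto simp: J_def)
  have cM: "coprime a M" unfolding M_def
  proof (rule prod_coprime_right)
    fix i assume "i \<in> X"
    then have "prime (p i)" "\<not> p i dvd a" using P by (auto simp: X_def)
    then show "coprime a (p i)" using prime_imp_coprime coprime_commute by blast
  qed
  have "gcd a n = gcd a G" unfolding nGM using cM by (rule gcd_mult_right_right_cancel)
  also have "\<dots> = G" using Gd by (simp add: gcd_proj2_if_dvd)
  finally have g: "gcd a n = G" .
  have cop: "coprime G M" unfolding G_def M_def using P inj
    by (intro coprime_prods[of "{1..r}"]) (auto simp: J_def X_def)
  have tot: "totient M = (\<Prod>i\<in>X. p i - 1)" unfolding M_def using P inj
    by (intro totient_prod_primes[of "{1..r}"]) (auto simp: X_def)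
  have "pg_deg n a + 1 = M + gcd a n * totient M - totient M"
  proof (rule deg_formula[OF n0 a])
    show "M * gcd a n = n" unfolding g using nGM by (simp add: mult.commute)
    show "coprime (gcd a n) M" unfolding g by (rule cop)
  qed
  then show ?thesis unfolding g tot by (simp add: M_def G_def X_def J_def)
qed




lemma prod_rearr:
  fixes f :: "nat \<Rightarrow> real"
  assumes "\<forall>i j. 1 \<le> i \<longrightarrow> i \<le> j \<longrightarrow> j \<le> r \<longrightarrow> f i \<le> f j"
    and "\<forall>i. 1 \<le> i \<longrightarrow> i \<le> r \<longrightarrow> 0 \<le> f i"
    and "X \<subseteq> {1..r}"
  shows "(\<Prod>i=1..card X. f i) \<le> (\<Prod>i\<in>X. f i)"
  using assms
proof (induction r arbitrary: X)
  case 0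
  then have "X = {}" by auto
  then show ?case by simp
next
  case (Suc r)
  show ?case
  proof (cases "Suc r \<in> X")
    case False
    then have "X \<subseteq> {1..r}" using Suc.prems(3) by (auto simp: le_Suc_eq)
    then show ?thesis using Suc.IH Suc.prems(1,2) by simp
  next
    case True
    define Y where "Y = X - {Suc r}"
    have Y: "Y \<subseteq> {1..r}" using Suc.prems(3) by (auto simp: Y_def le_Suc_eq)
    have finX: "finite X" using Suc.prems(3) finite_subset by blast
    have cX: "card X = Suc (card Y)" unfolding Y_def using card_Suc_Diff1[OF finX True] by (rule sym)
    have cle: "card X \<le> Suc r" using card_mono[OF _ Suc.prems(3)] by simp
    have IH: "(\<Prod>i=1..card Y. f i) \<le> (\<Prod>i\<in>Y. f i)" using Suc.IH Suc.prems(1,2) Y by simp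
    have nn1: "0 \<le> (\<Prod>i=1..card Y. f i)"
      using Suc.prems(2) cX cle by (intro prod_nonneg) auto
    have "(\<Prod>i=1..card X. f i) = (\<Prod>i=1..card Y. f i) * f (Suc (card Y))" by (simp add: cX)
    also have "\<dots> \<le> (\<Prod>i\<in>Y. f i) * f (Suc r)"
      using Suc.prems(1,2) cX cle IH nn1 by (intro mult_mono) auto
    also have "\<dots> = (\<Prod>i\<in>X. f i)" using True finX
      by (simp add: Y_def prod.remove mult.commute)
    finally show ?thesis .
  qed
qed

lemma pi_lower:
  fixes q :: "nat \<Rightarrow> real"
  assumes "\<forall>i. 1 \<le> i \<longrightarrow> i \<le> s \<longrightarrow> real i + 1 \<le> q i"
  shows "1 / (real s + 1) \<le> (\<Prod>i=1..s. 1 - 1 / q i)"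
  using assms
proof (induction s)
  case 0
  then show ?case by simp
next
  case (Suc s)
  have IH: "1 / (real s + 1) \<le> (\<Prod>i=1..s. 1 - 1 / q i)" using Suc by simp
  have qs: "real s + 2 \<le> q (Suc s)" using Suc.prems by force
  have "1 / (real (Suc s) + 1) = (1 / (real s + 1)) * (1 - 1 / (real s + 2))"
    by (simp add: field_simps)
  also have "\<dots> \<le> (\<Prod>i=1..s. 1 - 1 / q i) * (1 - 1 / q (Suc s))"
  proof -
    have a: "1 - 1 / (real s + 2) \<le> 1 - 1 / q (Suc s)" using qs by (simp add: frac_le)
    have b: "0 \<le> (\<Prod>i=1..s. 1 - 1 / q i)" using IH by (smt (verit) divide_nonneg_nonneg of_nat_0_le_iff)
    have c: "0 \<le> 1 - 1 / (real s + 2)" by simp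
    show ?thesis using mult_mono[OF IH a b c] .
  qed
  also have "\<dots> = (\<Prod>i=1..Suc s. 1 - 1 / q i)" by simp
  finally show ?case .
qed

definition VV :: "(nat \<Rightarrow> real) \<Rightarrow> nat \<Rightarrow> nat set \<Rightarrow> real" where
  "VV q r X = (\<Prod>i\<in>X. q i) + (\<Prod>i\<in>X. 1 - 1 / q i) * ((\<Prod>i=1..r. q i) - (\<Prod>i\<in>X. q i))"

lemma prod_split:
  fixes f :: "nat \<Rightarrow> 'a::comm_monoid_mult"
  assumes "s \<le> r"
  shows "(\<Prod>i=1..r. f i) = (\<Prod>i=1..s. f i) * (\<Prod>i=s+1..r. f i)"
proof -
  have "{1..r} = {1..s} \<union> {s+1..r}" using assms by auto
  then show ?thesis by (simp add: prod.union_disjoint[symmetric] ivl_disj_int)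
qed

lemma Hdiff:
  fixes q :: "nat \<Rightarrow> real"
  assumes "s + 1 \<le> r" and pos: "q (s+1) \<noteq> 0"
  shows "VV q r {1..s} - VV q r {1..s+1} =
    (\<Prod>i=1..s. q i) * ((\<Prod>i=1..s. 1 - 1 / q i) * (q (s+1) - 2 + (\<Prod>i=s+2..r. q i)) - (q (s+1) - 1))"
proof -
  define M where "M = (\<Prod>i=1..s. q i)"
  define pi where "pi = (\<Prod>i=1..s. 1 - 1 / q i)"
  define Q where "Q = q (s+1)"
  define C where "C = (\<Prod>i=s+2..r. q i)"
  have N: "(\<Prod>i=1..r. q i) = M * Q * C"
  proof -
    have "(\<Prod>i=1..r. q i) = M * (\<Prod>i=s+1..r. q i)" unfolding M_def using assms(1) by (intro prod_split) simp
    also have "(\<Prod>i=s+1..r. q i) = Q * C" unfolding Q_def C_def using assms(1)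
      by (subst prod.atLeast_Suc_atMost) simp_all
    finally show ?thesis by simp
  qed
  have M1: "(\<Prod>i=1..s+1. q i) = M * Q" by (simp add: M_def Q_def)
  have P1: "(\<Prod>i=1..s+1. 1 - 1 / q i) = pi * (1 - 1 / Q)" by (simp add: pi_def Q_def)
  have Q0: "Q \<noteq> 0" using pos by (simp add: Q_def)
  have "VV q r {1..s} - VV q r {1..s+1} = M + pi * (M*Q*C - M) - (M*Q + pi * (1 - 1/Q) * (M*Q*C - M*Q))"
    unfolding VV_def N M1 P1 by (simp add: M_def pi_def)
  also have "\<dots> = M * (pi * (Q - 2 + C) - (Q - 1))" using Q0 by (simp add: field_simps)
  finally show ?thesis by (simp add: M_def pi_def Q_def C_def)
qed




locale qs =
  fixes q :: "nat \<Rightarrow> real" and r :: nat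
  assumes Q1: "\<And>i. 1 \<le> i \<Longrightarrow> i \<le> r \<Longrightarrow> real i + 1 \<le> q i"
    and Q2: "\<And>i j. 1 \<le> i \<Longrightarrow> i < j \<Longrightarrow> j \<le> r \<Longrightarrow> q i + 1 \<le> q j"
begin

lemma q2: "1 \<le> i \<Longrightarrow> i \<le> r \<Longrightarrow> 2 \<le> q i"
  using Q1[of i] by simp

lemma Hstep:
  assumes "s + 3 \<le> r"
  shows "VV q r {1..s+1} \<le> VV q r {1..s}"
proof -
  define M where "M = (\<Prod>i=1..s. q i)"
  define pi where "pi = (\<Prod>i=1..s. 1 - 1 / q i)"
  define Q where "Q = q (s+1)"
  define C where "C = (\<Prod>i=s+2..r. q i)"
  have Qge: "real s + 2 \<le> Q" using Q1[of "s+1"] assms by (simp add: Q_def)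
  have d: "VV q r {1..s} - VV q r {1..s+1} = M * (pi * (Q - 2 + C) - (Q - 1))"
    unfolding M_def pi_def Q_def C_def using assms Qge by (intro Hdiff) (auto simp: Q_def)
  have M0: "0 \<le> M" unfolding M_def using q2 assms by (intro prod_nonneg) force
  have pil: "1 / (real s + 1) \<le> pi" unfolding pi_def using Q1 assms by (intro pi_lower) auto
  have pi0: "0 \<le> pi" using pil by (smt (verit) divide_nonneg_nonneg of_nat_0_le_iff)
  define T where "T = (\<Prod>i=s+4..r. q i)"
  have CT: "C = q (s+2) * (q (s+3) * T)" unfolding C_def T_def using assms
    by (subst prod.atLeast_Suc_atMost, simp, subst prod.atLeast_Suc_atMost, simp_all add: numeral_eq_Suc)
  have T1: "1 \<le> T" unfolding T_def
  proof (intro prod_ge_1)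
    fix x assume "x \<in> {s+4..r}"
    then have "2 \<le> q x" using q2[of x] by simp
    then show "1 \<le> q x" by simp
  qed
  have a1: "Q + 1 \<le> q (s+2)" unfolding Q_def using Q2[of "s+1" "s+2"] assms by simp
  have a2: "real s + 4 \<le> q (s+3)" using Q1[of "s+3"] assms by simp
  have "q (s+3) \<le> q (s+3) * T" using T1 a2 by (simp add: mult_le_cancel_left1)
  then have b2: "real s + 1 \<le> q (s+3) * T" using a2 by linarith
  have Cge: "(Q - 1) * (real s + 1) \<le> C" unfolding CT
    using a1 b2 Qge by (intro mult_mono) auto
  have "Q - 1 = (1 / (real s + 1)) * ((Q - 1) * (real s + 1))" by simp
  also have "\<dots> \<le> pi * C" using pil Cge pi0 Qge by (intro mult_mono) auto
  also have "\<dots> \<le> pi * (Q - 2 + C)" using pi0 Qge by (intro mult_left_mono) auto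
  finally have "0 \<le> pi * (Q - 2 + C) - (Q - 1)" by simp
  then have "0 \<le> M * (pi * (Q - 2 + C) - (Q - 1))" using M0 by simp
  then show ?thesis using d by simp
qed

lemma Hmono_aux:
  assumes "3 \<le> r"
  shows "s + k = r - 2 \<Longrightarrow> VV q r {1..r-2} \<le> VV q r {1..s}"
proof (induction k arbitrary: s)
  case 0
  then show ?case by simp
next
  case (Suc k)
  then have "VV q r {1..r-2} \<le> VV q r {1..s+1}" by simp
  also have "\<dots> \<le> VV q r {1..s}" using Suc.prems assms by (intro Hstep) simp
  finally show ?case .
qed

lemma Hmono: "3 \<le> r \<Longrightarrow> s \<le> r - 2 \<Longrightarrow> VV q r {1..r-2} \<le> VV q r {1..s}"
  using Hmono_aux[of s "r - 2 - s"] by simp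

lemma VX:
  assumes X: "X \<subseteq> {1..r}"
  shows "VV q r {1..card X} \<le> VV q r X"
proof -
  define N where "N = (\<Prod>i=1..r. q i)"
  define MX where "MX = (\<Prod>i\<in>X. q i)"
  define PX where "PX = (\<Prod>i\<in>X. 1 - 1 / q i)"
  define Ms where "Ms = (\<Prod>i=1..card X. q i)"
  define Ps where "Ps = (\<Prod>i=1..card X. 1 - 1 / q i)"
  have mono: "\<forall>i j. 1 \<le> i \<longrightarrow> i \<le> j \<longrightarrow> j \<le> r \<longrightarrow> q i \<le> q j"
  proof (intro allI impI)
    fix i j :: nat assume "1 \<le> i" "i \<le> j" "j \<le> r"
    then show "q i \<le> q j" using Q2[of i j] by (cases "i = j") auto
  qed
  have 1: "Ms \<le> MX" unfolding Ms_def MX_def using mono q2 X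
    by (intro prod_rearr) (auto, smt (verit))
  have 2: "Ps \<le> PX" unfolding Ps_def PX_def
  proof (rule prod_rearr[OF _ _ X])
    show "\<forall>i j. 1 \<le> i \<longrightarrow> i \<le> j \<longrightarrow> j \<le> r \<longrightarrow> 1 - 1 / q i \<le> 1 - 1 / q j"
    proof (intro allI impI)
      fix i j :: nat assume h: "1 \<le> i" "i \<le> j" "j \<le> r"
      then have "q i \<le> q j" "2 \<le> q i" using mono q2 by auto
      then show "1 - 1 / q i \<le> 1 - 1 / q j" by (simp add: frac_le)
    qed
    show "\<forall>i. 1 \<le> i \<longrightarrow> i \<le> r \<longrightarrow> 0 \<le> 1 - 1 / q i"
    proof (intro allI impI)
      fix i :: nat assume "1 \<le> i" "i \<le> r"
      then have "2 \<le> q i" using q2 by simp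
      then show "0 \<le> 1 - 1 / q i" by simp
    qed
  qed
  have 3: "PX \<le> 1" unfolding PX_def using q2 X by (intro prod_le_1) force
  have 4: "MX \<le> N" unfolding MX_def N_def using q2 X by (intro prod_mono2) force+
  have e: "VV q r X - VV q r {1..card X} = (MX - Ms) * (1 - PX) + (PX - Ps) * (N - Ms)"
    unfolding VV_def MX_def Ms_def PX_def Ps_def N_def by (simp add: algebra_simps)
  have "0 \<le> (MX - Ms) * (1 - PX)" using 1 3 by simp
  moreover have "0 \<le> (PX - Ps) * (N - Ms)" using 1 2 4 by simp
  ultimately show ?thesis using e by simp
qed

lemma Vtop: "VV q r {1..r} = (\<Prod>i=1..r. q i)" by (simp add: VV_def)

lemma Vle: "X \<subseteq> {1..r} \<Longrightarrow> VV q r X \<le> (\<Prod>i=1..r. q i)"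
proof -
  assume X: "X \<subseteq> {1..r}"
  have 3: "(\<Prod>i\<in>X. 1 - 1 / q i) \<le> 1" using q2 X by (intro prod_le_1) force
  have 4: "(\<Prod>i\<in>X. q i) \<le> (\<Prod>i=1..r. q i)" using q2 X by (intro prod_mono2) force+
  have "0 \<le> (1 - (\<Prod>i\<in>X. 1 - 1 / q i)) * ((\<Prod>i=1..r. q i) - (\<Prod>i\<in>X. q i))"
    using 3 4 by simp
  then show ?thesis unfolding VV_def by (simp add: algebra_simps)
qed

lemma Vmin:
  assumes "3 \<le> r" "X \<subseteq> {1..r}"
  shows "min (VV q r {1..r-1}) (VV q r {1..r-2}) \<le> VV q r X"
proof -
  have c: "card X \<le> r" using card_mono[OF _ assms(2)] by simp
  have v: "VV q r {1..card X} \<le> VV q r X" using VX[OF assms(2)] .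
  consider "card X \<le> r - 2" | "card X = r - 1" | "card X = r" using c by linarith
  then show ?thesis
  proof cases
    case 1
    then show ?thesis using Hmono[OF assms(1) 1] v by simp
  next
    case 2
    then show ?thesis using v by simp
  next
    case 3
    have "VV q r {1..r-1} \<le> (\<Prod>i=1..r. q i)" by (intro Vle) auto
    then show ?thesis using v 3 Vtop by simp
  qed
qed

end




theorem theorem1p2:
  fixes p :: "nat \<Rightarrow> nat" and r n :: nat
  assumes "r \<ge> 3"
    and "\<And>i. i \<in> {1..r} \<Longrightarrow> prime (p i)"
    and "\<And>i j. i \<in> {1..r} \<Longrightarrow> j \<in> {1..r} \<Longrightarrow> i < j \<Longrightarrow> p i < p j"
    and "n = (\<Prod>i=1..r. p i)"
  shows "pg_min_deg n = min (pg_deg n (p (r-1) * p r)) (pg_deg n (p r)) \<and>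
         (pg_min_deg n = pg_deg n (p r) \<longleftrightarrow>
           real (totient (p r)) \<ge>
             (real (\<Prod>i=1..r-2. p i) / real (totient (\<Prod>i=1..r-2. p i)) - 1)
               * real (totient (p (r-1)))) \<and>
         (totient (p r) \<ge> (r - 2) * totient (p (r-1)) \<longrightarrow> pg_min_deg n = pg_deg n (p r))"
proof -
  note r3 = assms(1) and pr = assms(2) and mon = assms(3) and nd = assms(4)
  define q where "q = (\<lambda>i. real (p i))"
  have P: "\<forall>i\<in>{1..r}. prime (p i)" using pr by blast
  have inj: "inj_on p {1..r}"
  proof (rule inj_onI)
    fix i j assume "i \<in> {1..r}" "j \<in> {1..r}" "p i = p j"
    show "i = j"
    proof (rule ccontr)
      assume "i \<noteq> j"
      then consider "i < j" | "j < i" by linarith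
      then have "p i \<noteq> p j"
      proof cases
        case 1 then show ?thesis using mon[OF \<open>i \<in> {1..r}\<close> \<open>j \<in> {1..r}\<close>] by simp
      next
        case 2 then show ?thesis using mon[OF \<open>j \<in> {1..r}\<close> \<open>i \<in> {1..r}\<close>] by simp
      qed
      then show False using \<open>p i = p j\<close> by simp
    qed
  qed
  have pge: "i + 1 \<le> p i" if "1 \<le> i" "i \<le> r" for i
    using that
  proof (induction i)
    case 0 then show ?case by simp
  next
    case (Suc i)
    show ?case
    proof (cases "i = 0")
      case True
      have "prime (p 1)" using pr Suc.prems True by simp
      then have "2 \<le> p 1" by (rule prime_ge_2_nat)
      then show ?thesis using True by simp
    next
      case False
      then have "i + 1 \<le> p i" using Suc by simp
      moreover have "p i < p (Suc i)" using mon[of i "Suc i"] Suc.prems False by simp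
      ultimately show ?thesis by simp
    qed
  qed
  interpret qs q r
  proof
    fix i assume "1 \<le> i" "i \<le> r"
    then show "real i + 1 \<le> q i" using pge[of i] unfolding q_def by linarith
  next
    fix i j assume "1 \<le> i" "i < j" "j \<le> r"
    then have "p i < p j" using mon[of i j] by simp
    then show "q i + 1 \<le> q j" unfolding q_def by linarith
  qed
  have p1: "1 \<le> p i" if "i \<in> {1..r}" for i using pr[OF that] prime_ge_1_nat by blast
  have degR: "real (pg_deg n a) + 1 = VV q r {i\<in>{1..r}. \<not> p i dvd a}" if a: "a < n" for a
  proof -
    define X where "X = {i\<in>{1..r}. \<not> p i dvd a}"
    define J where "J = {i\<in>{1..r}. p i dvd a}"
    have XI: "X \<subseteq> {1..r}" "J \<subseteq> {1..r}" by (auto simp: X_def J_def)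
    have fin: "finite X" "finite J" by (auto simp: X_def J_def)
    have nat_eq: "pg_deg n a + 1 = (\<Prod>i\<in>X. p i) + (\<Prod>i\<in>J. p i) * (\<Prod>i\<in>X. p i - 1) - (\<Prod>i\<in>X. p i - 1)"
      unfolding X_def J_def using deg_struct[OF P inj nd a] .
    have G1: "1 \<le> (\<Prod>i\<in>J. p i)" using p1 XI by (intro prod_ge_1) auto
    have le: "(\<Prod>i\<in>X. p i - 1) \<le> (\<Prod>i\<in>J. p i) * (\<Prod>i\<in>X. p i - 1)" using G1 by simp
    have R: "real (pg_deg n a) + 1 = real (\<Prod>i\<in>X. p i) + real (\<Prod>i\<in>J. p i) * real (\<Prod>i\<in>X. p i - 1) - real (\<Prod>i\<in>X. p i - 1)"
    proof -
      have "real (pg_deg n a + 1) = real ((\<Prod>i\<in>X. p i) + (\<Prod>i\<in>J. p i) * (\<Prod>i\<in>X. p i - 1) - (\<Prod>i\<in>X. p i - 1))"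
        using nat_eq by simp
      moreover have "(\<Prod>i\<in>X. p i - 1) \<le> (\<Prod>i\<in>X. p i) + (\<Prod>i\<in>J. p i) * (\<Prod>i\<in>X. p i - 1)"
        using le by linarith
      ultimately show ?thesis by (simp only: of_nat_diff of_nat_add of_nat_mult of_nat_1)
    qed
    have un: "{1..r} = J \<union> X" "J \<inter> X = {}" by (auto simp: J_def X_def)
    have N: "real (\<Prod>i\<in>J. p i) * real (\<Prod>i\<in>X. p i) = (\<Prod>i=1..r. q i)"
    proof -
      have "(\<Prod>i=1..r. q i) = (\<Prod>i\<in>J. q i) * (\<Prod>i\<in>X. q i)" unfolding un(1)
        by (rule prod.union_disjoint) (use fin un in auto)
      then show ?thesis by (simp add: q_def)
    qed
    have F: "real (\<Prod>i\<in>X. p i - 1) = (\<Prod>i\<in>X. q i) * (\<Prod>i\<in>X. 1 - 1 / q i)"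
    proof -
      have "real (\<Prod>i\<in>X. p i - 1) = (\<Prod>i\<in>X. q i - 1)"
        unfolding of_nat_prod q_def using p1 XI by (intro prod.cong refl) (auto simp: of_nat_diff)
      also have "\<dots> = (\<Prod>i\<in>X. q i * (1 - 1 / q i))"
        using q2 XI by (intro prod.cong refl) (force simp: field_simps)
      also have "\<dots> = (\<Prod>i\<in>X. q i) * (\<Prod>i\<in>X. 1 - 1 / q i)" by (rule prod.distrib)
      finally show ?thesis .
    qed
    have Mq: "real (\<Prod>i\<in>X. p i) = (\<Prod>i\<in>X. q i)" by (simp add: q_def)
    define MX where "MX = (\<Prod>i\<in>X. q i)"
    define PX where "PX = (\<Prod>i\<in>X. 1 - 1 / q i)"
    define Gr where "Gr = real (\<Prod>i\<in>J. p i)"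
    have R2: "real (pg_deg n a) + 1 = MX + Gr*(MX*PX) - MX*PX"
      using R unfolding F Mq MX_def PX_def Gr_def .
    have NN: "(\<Prod>i=1..r. q i) = Gr * MX" using N unfolding Mq Gr_def MX_def by simp
    have V: "VV q r {i\<in>{1..r}. \<not> p i dvd a} = MX + PX * (Gr * MX - MX)"
      unfolding VV_def X_def[symmetric] MX_def[symmetric] PX_def[symmetric] NN ..
    show ?thesis unfolding V R2 by (simp add: algebra_simps)
  qed
  have dvdiff: "p i dvd p j \<longleftrightarrow> i = j" if "i \<in> {1..r}" "j \<in> {1..r}" for i j
  proof
    assume "p i dvd p j"
    then have "p i = p j" by (rule primes_dvd_imp_eq[OF pr[OF that(1)] pr[OF that(2)]])
    then show "i = j" using inj_onD[OF inj _ that] by blast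
  qed simp
  have rin: "r - 1 \<in> {1..r}" "r \<in> {1..r}" using r3 by auto
  have X1: "{i\<in>{1..r}. \<not> p i dvd p r} = {1..r-1}"
  proof -
    have "i \<in> {1..r} \<and> \<not> p i dvd p r \<longleftrightarrow> i \<in> {1..r-1}" for i
    proof (cases "i \<in> {1..r}")
      case True
      have a: "\<not> p i dvd p r \<longleftrightarrow> i \<noteq> r" using dvdiff[OF True rin(2)] by blast
      have b: "i \<noteq> r \<longleftrightarrow> i \<in> {1..r-1}" using True by auto
      show ?thesis using a b True by blast
    next
      case False
      then show ?thesis by auto
    qed
    then show ?thesis by blast
  qed
  have X2: "{i\<in>{1..r}. \<not> p i dvd p (r-1) * p r} = {1..r-2}"
  proof -
    have "i \<in> {1..r} \<and> \<not> p i dvd p (r-1) * p r \<longleftrightarrow> i \<in> {1..r-2}" for i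
    proof (cases "i \<in> {1..r}")
      case True
      have a0: "p i dvd p (r-1) * p r \<longleftrightarrow> p i dvd p (r-1) \<or> p i dvd p r"
        by (rule prime_dvd_mult_iff[OF pr[OF True]])
      have a: "\<not> p i dvd p (r-1) * p r \<longleftrightarrow> i \<noteq> r - 1 \<and> i \<noteq> r"
        using a0 dvdiff[OF True rin(1)] dvdiff[OF True rin(2)] by blast
      have b: "i \<noteq> r - 1 \<and> i \<noteq> r \<longleftrightarrow> i \<in> {1..r-2}" using True r3 by auto
      show ?thesis using a b True by blast
    next
      case False
      then show ?thesis by auto
    qed
    then show ?thesis by blast
  qed
  define Pn where "Pn = (\<Prod>i=1..r-2. p i)"
  have nsplit: "n = Pn * (p (r-1) * p r)"
  proof -
    have "n = Pn * (\<Prod>i=r-2+1..r. p i)" unfolding nd Pn_def by (rule prod_split) simp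
    also have "r - 2 + 1 = r - 1" using r3 by simp
    also have "(\<Prod>i=r-1..r. p i) = p (r-1) * (\<Prod>i=Suc (r-1)..r. p i)"
      by (rule prod.atLeast_Suc_atMost) simp
    also have "Suc (r-1) = r" using r3 by simp
    finally show ?thesis by simp
  qed
  have Pn2: "2 \<le> Pn"
  proof -
    have "Pn = p 1 * (\<Prod>i=Suc 1..r-2. p i)" unfolding Pn_def using r3
      by (intro prod.atLeast_Suc_atMost) simp
    moreover have "1 \<le> (\<Prod>i=Suc 1..r-2. p i)" using p1 by (intro prod_ge_1) auto
    moreover have "2 \<le> p 1" using pr[of 1] r3 prime_ge_2_nat by simp
    ultimately show ?thesis using mult_le_mono[of 2 "p 1" 1 "\<Prod>i=Suc 1..r-2. p i"] by simp
  qed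
  have prpos: "0 < p (r-1) * p r" using p1 rin by (simp add: Suc_le_lessD)
  have lt2: "p (r-1) * p r < n" unfolding nsplit using Pn2 prpos by simp
  have lt1: "p r < n"
  proof -
    have h: "1 * p r \<le> p (r-1) * p r" by (rule mult_le_mono1) (rule p1[OF rin(1)])
    have "p r \<le> p (r-1) * p r" using h by (simp only: mult_1)
    then show ?thesis by (rule le_less_trans[OF _ lt2])
  qed
  define d1 where "d1 = pg_deg n (p r)"
  define d2 where "d2 = pg_deg n (p (r-1) * p r)"
  have d1R: "real d1 + 1 = VV q r {1..r-1}" unfolding d1_def using degR[OF lt1] X1 by simp
  have d2R: "real d2 + 1 = VV q r {1..r-2}" unfolding d2_def using degR[OF lt2] X2 by simp
  have lower: "min d2 d1 \<le> pg_deg n a" if "a \<in> {0..<n}" for a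
  proof -
    have an: "a < n" using that by simp
    have e: "real (pg_deg n a) + 1 = VV q r {i\<in>{1..r}. \<not> p i dvd a}" by (rule degR[OF an])
    have v: "min (VV q r {1..r-1}) (VV q r {1..r-2}) \<le> VV q r {i\<in>{1..r}. \<not> p i dvd a}"
      using r3 by (intro Vmin) auto
    have "min (real d1 + 1) (real d2 + 1) \<le> real (pg_deg n a) + 1"
      using v unfolding e[symmetric] d1R[symmetric] d2R[symmetric] .
    then have "real d1 + 1 \<le> real (pg_deg n a) + 1 \<or> real d2 + 1 \<le> real (pg_deg n a) + 1"
      by (simp only: min_le_iff_disj)
    then have "d1 \<le> pg_deg n a \<or> d2 \<le> pg_deg n a" by linarith
    then show ?thesis by (simp only: min_le_iff_disj) blast
  qed
  have mineq: "pg_min_deg n = min d2 d1"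
    unfolding pg_min_deg_def
  proof (rule Min_eqI)
    show "finite (pg_deg n ` {0..<n})" by simp
    show "min d2 d1 \<le> y" if "y \<in> pg_deg n ` {0..<n}" for y
    proof -
      from that obtain a where "a \<in> {0..<n}" "y = pg_deg n a" by blast
      then show ?thesis using lower by simp
    qed
    have "d1 \<in> pg_deg n ` {0..<n}" "d2 \<in> pg_deg n ` {0..<n}" unfolding d1_def d2_def using lt1 lt2 by auto
    then show "min d2 d1 \<in> pg_deg n ` {0..<n}" unfolding min_def by simp
  qed
  define M where "M = (\<Prod>i=1..r-2. q i)"
  define pi where "pi = (\<Prod>i=1..r-2. 1 - 1 / q i)"
  define Q where "Q = q (r-1)"
  have M0: "0 < M" unfolding M_def using q2 by (intro prod_pos) force
  have pil: "1 / (real (r-2) + 1) \<le> pi" unfolding pi_def using Q1 by (intro pi_lower) auto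
  have pi0: "0 < pi" using pil by (smt (verit) divide_pos_pos of_nat_0_le_iff)
  have Hd: "VV q r {1..r-2} - VV q r {1..r-1} = M * (pi * (Q - 2 + q r) - (Q - 1))"
  proof -
    have e1: "r - 2 + 1 = r - 1" "r - 2 + 2 = r" using r3 by simp_all
    have "2 \<le> q (r-1)" using r3 by (intro q2) auto
    then have qn: "q (r-2+1) \<noteq> 0" unfolding e1(1) by simp
    have "VV q r {1..r-2} - VV q r {1..r-2+1} =
      (\<Prod>i=1..r-2. q i) * ((\<Prod>i=1..r-2. 1 - 1 / q i) * (q (r-2+1) - 2 + (\<Prod>i=r-2+2..r. q i)) - (q (r-2+1) - 1))"
      using r3 qn by (intro Hdiff) auto
    then show ?thesis unfolding e1 M_def pi_def Q_def by simp
  qed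
  have iff1: "pg_min_deg n = d1 \<longleftrightarrow> 0 \<le> pi * (Q - 2 + q r) - (Q - 1)"
  proof -
    have "pg_min_deg n = d1 \<longleftrightarrow> d1 \<le> d2" unfolding mineq by auto
    also have "\<dots> \<longleftrightarrow> VV q r {1..r-1} \<le> VV q r {1..r-2}" using d1R d2R by linarith
    also have "\<dots> \<longleftrightarrow> 0 \<le> M * (pi * (Q - 2 + q r) - (Q - 1))" using Hd by linarith
    also have "\<dots> \<longleftrightarrow> 0 \<le> pi * (Q - 2 + q r) - (Q - 1)" using M0 by (simp add: zero_le_mult_iff)
    finally show ?thesis .
  qed
  have t1: "real (totient (p r)) = q r - 1"
    using pr[OF rin(2)] p1[OF rin(2)] by (simp add: totient_prime q_def of_nat_diff)
  have t2: "real (totient (p (r-1))) = Q - 1"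
    using pr[OF rin(1)] p1[OF rin(1)] by (simp add: totient_prime Q_def q_def of_nat_diff)
  have t3: "real Pn = M" by (simp add: Pn_def M_def q_def)
  have t4: "real (totient Pn) = M * pi"
  proof -
    have tP: "totient Pn = (\<Prod>i=1..r-2. p i - 1)" unfolding Pn_def using P inj
      by (intro totient_prod_primes[of "{1..r}"]) auto
    have "real (\<Prod>i=1..r-2. p i - 1) = (\<Prod>i=1..r-2. q i - 1)"
      unfolding of_nat_prod
    proof (rule prod.cong[OF refl])
      fix i assume "i \<in> {1..r-2}"
      then have "1 \<le> p i" using p1 by auto
      then show "real (p i - 1) = q i - 1" by (simp add: q_def of_nat_diff)
    qed
    then have "real (totient Pn) = (\<Prod>i=1..r-2. q i - 1)" using tP by simp
    also have "\<dots> = (\<Prod>i=1..r-2. q i * (1 - 1 / q i))"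
      using q2 by (intro prod.cong refl) (force simp: field_simps)
    also have "\<dots> = M * pi" unfolding M_def pi_def by (rule prod.distrib)
    finally show ?thesis .
  qed
  have iff2: "(real (totient (p r)) \<ge> (real Pn / real (totient Pn) - 1) * real (totient (p (r-1))))
      \<longleftrightarrow> 0 \<le> pi * (Q - 2 + q r) - (Q - 1)"
  proof -
    have "real Pn / real (totient Pn) - 1 = (1 - pi) / pi" unfolding t3 t4 using M0 pi0
      by (simp add: field_simps)
    then have "(real Pn / real (totient Pn) - 1) * real (totient (p (r-1))) = ((1 - pi) * (Q - 1)) / pi"
      unfolding t2 by simp
    then have "(real (totient (p r)) \<ge> (real Pn / real (totient Pn) - 1) * real (totient (p (r-1))))
       \<longleftrightarrow> (1 - pi) * (Q - 1) \<le> (q r - 1) * pi"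
      unfolding t1 using pi0 by (simp add: pos_divide_le_eq)
    moreover have "(q r - 1) * pi - (1 - pi) * (Q - 1) = pi * (Q - 2 + q r) - (Q - 1)"
      by (simp add: algebra_simps)
    ultimately show ?thesis by linarith
  qed
  have part2: "pg_min_deg n = pg_deg n (p r) \<longleftrightarrow>
           real (totient (p r)) \<ge>
             (real (\<Prod>i=1..r-2. p i) / real (totient (\<Prod>i=1..r-2. p i)) - 1)
               * real (totient (p (r-1)))"
    using iff1 iff2 unfolding d1_def Pn_def by simp
  have part3: "pg_min_deg n = pg_deg n (p r)" if h: "totient (p r) \<ge> (r - 2) * totient (p (r-1))"
  proof -
    have "1 / pi \<le> 1 / (1 / (real (r-2) + 1))" using pil pi0 by (intro divide_left_mono) auto
    then have "1 / pi \<le> real (r-2) + 1" by simp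
    then have a: "real Pn / real (totient Pn) - 1 \<le> real (r-2)" unfolding t3 t4 using M0 pi0
      by simp
    have Q1': "0 \<le> Q - 1" using q2[of "r-1"] rin by (simp add: Q_def)
    have "(real Pn / real (totient Pn) - 1) * real (totient (p (r-1))) \<le> real (r-2) * real (totient (p (r-1)))"
      using a by (intro mult_right_mono) auto
    also have "\<dots> \<le> real (totient (p r))" using h by (metis of_nat_le_iff of_nat_mult)
    finally show ?thesis using part2 unfolding Pn_def by simp
  qed
  show ?thesis using mineq part2 part3 unfolding d1_def d2_def by blast
qed


end
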